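(* Let $n\ge 2$, let $\sigma,\delta,\tau\in\mathbb{C}$ with $\sigma\tau\ne0$, and suppose the tridiagonal Toeplitz matrix $T=(n;\sigma,\delta,\tau)$ is normal. For $h=1,\dots,n$ let $\widetilde{x}_h$ be a unit right eigenvector of $T$ associated with $\lambda_h=\delta+2\sqrt{\sigma\tau}\cos\frac{h\pi}{n+1}$. Then \[ \kappa(\widetilde{x}_h)= \begin{cases} \left(4|\sigma|\sin\frac{\pi}{2(n+1)}\sin\frac{(2h-1)\pi}{2(n+1)}\right)^{-1}, & 1<h\le\frac n2 \text{ or } h=n,\\[1mm] \left(4|\sigma|\sin\frac{\pi}{2(n+1)}\sin\frac{(2h+1)\pi}{2(n+1)}\right)^{-1}, & h=1 \text{ or } \frac n2<h<n. \end{cases} \] In particular $\kappa(\widetilde{x}_h)$ depends only on $h$, $n$ and $|\sigma|$. Moreover \[ \max_{h=1,\dots,n}\kappa(\widetilde{x}_h)=\left(4|\sigma|\sin\frac{\pi}{2(n+1)}\sin\frac{3\pi}{2(n+1)}\right)^{-1}, \] and this maximum is attained by the eigenvectors associated with the indices $h=1,2,n-1,n$.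
   Context: $T=(n;\sigma,\delta,\tau)$ is the $n\times n$ tridiagonal Toeplitz matrix with diagonal $\delta$, superdiagonal $\tau$, subdiagonal $\sigma$; for $\sigma\tau\ne0$ its eigenvalues $\lambda_h=\delta+2\sqrt{\sigma\tau}\cos\frac{h\pi}{n+1}$ are simple. Eigenvector condition number: for $A\in\mathbb{C}^{n\times n}$ and a unit eigenvector $x$ associated with a simple eigenvalue $\mu$, let $U\in\mathbb{C}^{n\times(n-1)}$ have orthonormal columns spanning $\mathrm{Range}(A-\mu I)$; then $\kappa(x)=\|(\mu I-U^HAU)^{-1}\|_2$ (the condition number of the one-dimensional invariant subspace spanned by $x$). *)

theory Defs
  imports "HOL-Analysis.Analysis" "Jordan_Normal_Form.Schur_Decomposition"
begin

definition tridiag_toeplitz :: "nat \<Rightarrow> complex \<Rightarrow> complex \<Rightarrow> complex \<Rightarrow> complex mat" where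
  "tridiag_toeplitz n \<sigma> \<delta> \<tau> = mat n n (\<lambda>(i,j).
     if i = j then \<delta> else if j = i + 1 then \<tau> else if i = j + 1 then \<sigma> else 0)"

definition vnorm :: "complex vec \<Rightarrow> real" where
  "vnorm v = sqrt (\<Sum>i<dim_vec v. (cmod (v $ i))\<^sup>2)"

definition opnorm2 :: "complex mat \<Rightarrow> real" where
  "opnorm2 M = Sup {vnorm (M *\<^sub>v x) | x. x \<in> carrier_vec (dim_col M) \<and> vnorm x = 1}"

definition mat_inv :: "complex mat \<Rightarrow> complex mat" where
  "mat_inv B = (SOME C. C \<in> carrier_mat (dim_row B) (dim_row B) \<and>
       B * C = 1\<^sub>m (dim_row B) \<and> C * B = 1\<^sub>m (dim_row B))"

definition normal_mat :: "complex mat \<Rightarrow> bool" where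
  "normal_mat A \<longleftrightarrow> A * mat_adjoint A = mat_adjoint A * A"

definition range_basis :: "complex mat \<Rightarrow> complex \<Rightarrow> complex mat \<Rightarrow> bool" where
  "range_basis A \<mu> U \<longleftrightarrow> (let n = dim_row A in
     U \<in> carrier_mat n (n - 1) \<and> mat_adjoint U * U = 1\<^sub>m (n - 1) \<and>
     {(A - \<mu> \<cdot>\<^sub>m 1\<^sub>m n) *\<^sub>v y | y. y \<in> carrier_vec n} = {U *\<^sub>v z | z. z \<in> carrier_vec (n - 1)})"

definition eigvec_cond :: "complex mat \<Rightarrow> complex vec \<Rightarrow> real" where
  "eigvec_cond A x = (let \<mu> = (SOME \<mu>. A *\<^sub>v x = \<mu> \<cdot>\<^sub>v x);
                          U = (SOME U. range_basis A \<mu> U);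
                          m = dim_row A - 1 in
     opnorm2 (mat_inv (\<mu> \<cdot>\<^sub>m 1\<^sub>m m - mat_adjoint U * A * U)))"

end

theory Submission
  imports Defs
begin

lemma adj_dims[simp]: "dim_row (mat_adjoint A) = dim_col A" "dim_col (mat_adjoint A) = dim_row A"
  unfolding mat_adjoint_def by (auto simp: mat_of_rows_def)

lemma adj_carrier[simp,intro]: "A \<in> carrier_mat r c \<Longrightarrow> mat_adjoint A \<in> carrier_mat c r"
  unfolding carrier_mat_def by auto

lemma adj_index[simp]: "i < dim_col A \<Longrightarrow> j < dim_row A \<Longrightarrow> mat_adjoint A $$ (i,j) = cnj (A $$ (j,i))"
  unfolding mat_adjoint_def by (auto simp: mat_of_rows_def)

lemma adj_adj[simp]: "mat_adjoint (mat_adjoint (A::complex mat)) = A"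
  by (rule eq_matI) auto

lemma adj_mult: assumes "A \<in> carrier_mat r k" "B \<in> carrier_mat k c"
  shows "mat_adjoint (A * B) = mat_adjoint B * mat_adjoint (A :: complex mat)"
  using assms by (intro eq_matI) (auto simp: scalar_prod_def sum_conjugate[symmetric] mult.commute)

lemma adj_one[simp]: "mat_adjoint (1\<^sub>m n :: complex mat) = 1\<^sub>m n"
  by (rule eq_matI) auto

lemma inner_adj: assumes "A \<in> carrier_mat r c" "u \<in> carrier_vec c" "w \<in> carrier_vec r"
  shows "(A *\<^sub>v u) \<bullet>c w = u \<bullet>c (mat_adjoint A *\<^sub>v (w :: complex vec))"
proof -
  have "(A *\<^sub>v u) \<bullet>c w = (\<Sum>i<r. (\<Sum>l<c. A $$ (i,l) * u $ l) * cnj (w $ i))"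
    using assms by (auto simp: scalar_prod_def row_def lessThan_atLeast0)
  also have "\<dots> = (\<Sum>i<r. \<Sum>l<c. A $$ (i,l) * u $ l * cnj (w $ i))"
    by (simp add: sum_distrib_right)
  also have "\<dots> = (\<Sum>l<c. \<Sum>i<r. A $$ (i,l) * u $ l * cnj (w $ i))"
    by (rule sum.swap)
  also have "\<dots> = (\<Sum>l<c. u $ l * cnj (\<Sum>i<r. cnj (A $$ (i,l)) * w $ i))"
    by (simp add: sum_distrib_left mult_ac)
  also have "\<dots> = u \<bullet>c (mat_adjoint A *\<^sub>v w)"
    using assms by (auto simp: scalar_prod_def row_def lessThan_atLeast0 intro!: sum.cong)
  finally show ?thesis .
qed

lemma vnorm_sq: "(vnorm v)\<^sup>2 = (\<Sum>i<dim_vec v. (cmod (v $ i))\<^sup>2)"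
  unfolding vnorm_def by (simp add: sum_nonneg)

lemma vnorm_nonneg: "vnorm v \<ge> 0"
  unfolding vnorm_def by (simp add: sum_nonneg)

lemma cinner_self: "(v::complex vec) \<bullet>c v = complex_of_real ((vnorm v)\<^sup>2)"
proof -
  have "v \<bullet>c v = (\<Sum>i<dim_vec v. v $ i * cnj (v $ i))"
    unfolding scalar_prod_def by (simp add: lessThan_atLeast0)
  also have "\<dots> = (\<Sum>i<dim_vec v. complex_of_real ((cmod (v $ i))\<^sup>2))"
    by (simp only: complex_norm_square)
  also have "\<dots> = complex_of_real ((vnorm v)\<^sup>2)" unfolding vnorm_sq of_real_sum ..
  finally show ?thesis .
qed

lemma iso: assumes "Q \<in> carrier_mat r c" "mat_adjoint Q * Q = 1\<^sub>m c" "u \<in> carrier_vec c"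
  shows "vnorm (Q *\<^sub>v u) = vnorm (u :: complex vec)"
proof -
  have "(Q *\<^sub>v u) \<bullet>c (Q *\<^sub>v u) = u \<bullet>c (mat_adjoint Q *\<^sub>v (Q *\<^sub>v u))"
    using assms by (intro inner_adj) auto
  also have "mat_adjoint Q *\<^sub>v (Q *\<^sub>v u) = (mat_adjoint Q * Q) *\<^sub>v u"
    using assms by (intro assoc_mult_mat_vec[symmetric, of _ c r _ c]) auto
  also have "\<dots> = u" using assms by simp
  finally have "(vnorm (Q *\<^sub>v u))\<^sup>2 = (vnorm u)\<^sup>2" unfolding cinner_self of_real_eq_iff .
  then show ?thesis using vnorm_nonneg by (simp add: power2_eq_iff_nonneg)
qed

lemma if0_mult: "(if P then a else 0) * (b::'a::semiring_0) = (if P then a * b else 0)" by (cases P) auto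
lemma mult_if0: "(b::'a::semiring_0) * (if P then a else 0) = (if P then b * a else 0)" by (cases P) auto

lemma adj_mult_vec_carrier[simp]: "Z \<in> carrier_mat r c \<Longrightarrow> mat_adjoint Z *\<^sub>v y \<in> carrier_vec c"
  by (rule carrier_vecI) auto

definition dmat :: "nat \<Rightarrow> (nat \<Rightarrow> complex) \<Rightarrow> complex mat" where
  "dmat m d = mat m m (\<lambda>(i,j). if i = j then d i else 0)"

lemma dmat_carrier[simp]: "dmat m d \<in> carrier_mat m m" unfolding dmat_def by simp

lemma dmat_mult_vec: "u \<in> carrier_vec m \<Longrightarrow> dmat m d *\<^sub>v u = vec m (\<lambda>i. d i * u $ i)"
  unfolding dmat_def
  by (rule eq_vecI) (auto simp: scalar_prod_def row_def if0_mult cong: if_cong)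

lemma vnorm_dmat_le: assumes "u \<in> carrier_vec m" "\<And>k. k < m \<Longrightarrow> cmod (d k) \<le> M"
  shows "vnorm (dmat m d *\<^sub>v u) \<le> M * vnorm u"
proof -
  have M: "M \<ge> 0" if "m > 0" using assms(2)[of 0] that norm_ge_zero[of "d 0"] by linarith
  have "(vnorm (dmat m d *\<^sub>v u))\<^sup>2 = (\<Sum>i<m. (cmod (d i))\<^sup>2 * (cmod (u $ i))\<^sup>2)"
    using assms(1) by (simp add: vnorm_sq dmat_mult_vec norm_mult power_mult_distrib)
  also have "\<dots> \<le> (\<Sum>i<m. M\<^sup>2 * (cmod (u $ i))\<^sup>2)"
    by (intro sum_mono mult_right_mono power_mono assms(2)) auto
  also have "\<dots> = (M * vnorm u)\<^sup>2"
    using assms(1) by (simp add: vnorm_sq power_mult_distrib sum_distrib_left)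
  finally have "(vnorm (dmat m d *\<^sub>v u))\<^sup>2 \<le> (M * vnorm u)\<^sup>2" .
  moreover have "M * vnorm u \<ge> 0"
  proof (cases "m > 0")
    case True then show ?thesis using M vnorm_nonneg by simp
  next
    case False then have "vnorm u = 0" using assms(1) unfolding vnorm_def by simp
    then show ?thesis by simp
  qed
  ultimately show ?thesis using power2_le_imp_le by blast
qed

lemma vnorm_unit_vec: assumes "k < m" shows "vnorm (unit_vec m k :: complex vec) = 1"
proof -
  have "(\<Sum>i<m. (cmod (unit_vec m k $ i))\<^sup>2) = (\<Sum>i<m. if i = k then 1 else (0::real))"
    by (rule sum.cong) (auto simp: unit_vec_def)
  then show ?thesis using assms unfolding vnorm_def by simp
qed

lemma vnorm_smult: "vnorm (a \<cdot>\<^sub>v (v :: complex vec)) = cmod a * vnorm v"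
proof -
  have "(vnorm (a \<cdot>\<^sub>v v))\<^sup>2 = (cmod a * vnorm v)\<^sup>2"
    by (simp add: vnorm_sq norm_mult power_mult_distrib sum_distrib_left)
  then show ?thesis using vnorm_nonneg by (simp add: power2_eq_iff_nonneg)
qed

lemma opnorm_unitary_diag:
  assumes Z: "Z \<in> carrier_mat m m" and ZZ1: "mat_adjoint Z * Z = 1\<^sub>m m" and ZZ2: "Z * mat_adjoint Z = 1\<^sub>m m"
    and bd: "\<And>k. k < m \<Longrightarrow> cmod (d k) \<le> M"
    and att: "k0 < m" "cmod (d k0) = M"
  shows "opnorm2 (Z * dmat m d * mat_adjoint Z) = M"
proof -
  let ?C = "Z * dmat m d * mat_adjoint Z"
  have C: "?C \<in> carrier_mat m m" using Z by auto
  have Cy: "?C *\<^sub>v y = Z *\<^sub>v (dmat m d *\<^sub>v (mat_adjoint Z *\<^sub>v y))" if "y \<in> carrier_vec m" for y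
  proof -
    have "?C *\<^sub>v y = (Z * dmat m d) *\<^sub>v (mat_adjoint Z *\<^sub>v y)"
      using Z that by (intro assoc_mult_mat_vec[of _ m m _ m]) auto
    also have "\<dots> = Z *\<^sub>v (dmat m d *\<^sub>v (mat_adjoint Z *\<^sub>v y))"
      using Z that by (intro assoc_mult_mat_vec[of _ m m _ m]) auto
    finally show ?thesis .
  qed
  have adjZ: "mat_adjoint (mat_adjoint Z) * mat_adjoint Z = 1\<^sub>m m" using ZZ2 by simp
  let ?S = "{vnorm (?C *\<^sub>v x) | x. x \<in> carrier_vec (dim_col ?C) \<and> vnorm x = 1}"
  have "Sup ?S = M"
  proof (rule cSup_eq_maximum)
    let ?y = "Z *\<^sub>v unit_vec m k0"
    have y: "?y \<in> carrier_vec m" using Z by auto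
    have "mat_adjoint Z *\<^sub>v ?y = (mat_adjoint Z * Z) *\<^sub>v unit_vec m k0"
      using Z by (intro assoc_mult_mat_vec[symmetric, of _ m m _ m]) auto
    also have "\<dots> = unit_vec m k0" using ZZ1 by simp
    finally have "mat_adjoint Z *\<^sub>v ?y = unit_vec m k0" .
    moreover have "dmat m d *\<^sub>v unit_vec m k0 = d k0 \<cdot>\<^sub>v unit_vec m k0"
      by (rule eq_vecI) (auto simp: dmat_mult_vec unit_vec_def)
    ultimately have "?C *\<^sub>v ?y = Z *\<^sub>v (d k0 \<cdot>\<^sub>v unit_vec m k0)"
      using Cy[OF y] by simp
    then have "vnorm (?C *\<^sub>v ?y) = M"
      using iso[OF Z ZZ1] att vnorm_smult vnorm_unit_vec by simp
    moreover have "vnorm ?y = 1" using iso[OF Z ZZ1] att vnorm_unit_vec by simp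
    ultimately show "M \<in> ?S" using y C by force
  next
    fix r assume "r \<in> ?S"
    then obtain y where y: "y \<in> carrier_vec m" "vnorm y = 1" and r: "r = vnorm (?C *\<^sub>v y)" using C by auto
    have u: "mat_adjoint Z *\<^sub>v y \<in> carrier_vec m" using Z y by auto
    have "r = vnorm (dmat m d *\<^sub>v (mat_adjoint Z *\<^sub>v y))"
      using r Cy[OF y(1)] iso[OF Z ZZ1, of "dmat m d *\<^sub>v (mat_adjoint Z *\<^sub>v y)"] 
        mult_mat_vec_carrier[OF dmat_carrier u] by simp
    also have "\<dots> \<le> M * vnorm (mat_adjoint Z *\<^sub>v y)" by (rule vnorm_dmat_le[OF u bd])
    also have "vnorm (mat_adjoint Z *\<^sub>v y) = 1" using iso[OF adj_carrier[OF Z] adjZ y(1)] y(2) by simp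
    finally show "r \<le> M" by simp
  qed
  then show ?thesis unfolding opnorm2_def .
qed

lemma mult_dmat: "Z \<in> carrier_mat r m \<Longrightarrow> Z * dmat m d = mat r m (\<lambda>(i,j). Z $$ (i,j) * d j)"
  unfolding dmat_def
  by (rule eq_matI) (auto simp: scalar_prod_def col_def row_def mult_if0 cong: if_cong)

lemma dmat_mult_dmat: "dmat m d1 * dmat m d2 = dmat m (\<lambda>k. d1 k * d2 k)"
  by (subst mult_dmat[of _ m]) (auto simp: dmat_def)

lemma dmat_one: "(\<And>k. k < m \<Longrightarrow> d k = 1) \<Longrightarrow> dmat m d = 1\<^sub>m m"
  unfolding dmat_def by (rule eq_matI) auto

lemma reduce:
  fixes A W U :: "complex mat"
  assumes A: "A \<in> carrier_mat n n" and W: "W \<in> carrier_mat n m" and U: "U \<in> carrier_mat n m"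
    and WW: "mat_adjoint W * W = 1\<^sub>m m" and UU: "mat_adjoint U * U = 1\<^sub>m m"
    and AW: "A * W = W * dmat m lam"
    and Wcol: "\<And>k. k < m \<Longrightarrow> \<exists>z \<in> carrier_vec m. col W k = U *\<^sub>v z"
    and ne: "\<And>k. k < m \<Longrightarrow> \<mu> \<noteq> lam k"
    and Zdef: "Z = mat_adjoint U * W"
  shows "mat_inv (\<mu> \<cdot>\<^sub>m 1\<^sub>m m - mat_adjoint U * A * U) = Z * dmat m (\<lambda>k. 1 / (\<mu> - lam k)) * mat_adjoint Z"
    and "mat_adjoint Z * Z = 1\<^sub>m m" and "Z * mat_adjoint Z = 1\<^sub>m m" and "Z \<in> carrier_mat m m"
proof -
  have UH: "mat_adjoint U \<in> carrier_mat m n" using U by auto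
  have Z: "Z \<in> carrier_mat m m" using Zdef UH W by auto
  then show "Z \<in> carrier_mat m m" .
  have ZH: "mat_adjoint Z \<in> carrier_mat m m" using Z by auto
  have UUW: "U * (mat_adjoint U * W) = W"
  proof (rule mat_col_eqI)
    fix k assume "k < dim_col W"
    then have k: "k < m" using W by auto
    obtain z where z: "z \<in> carrier_vec m" "col W k = U *\<^sub>v z" using Wcol[OF k] by blast
    have "mat_adjoint U *\<^sub>v (U *\<^sub>v z) = (mat_adjoint U * U) *\<^sub>v z"
      using U z by (intro assoc_mult_mat_vec[symmetric, of _ m n _ m]) auto
    also have "\<dots> = z" using UU z by simp
    finally have "mat_adjoint U *\<^sub>v (U *\<^sub>v z) = z" .
    moreover have "col (U * (mat_adjoint U * W)) k = U *\<^sub>v col (mat_adjoint U * W) k"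
      using U UH W k by (intro col_mult2[of _ n m _ m]) auto
    moreover have "col (mat_adjoint U * W) k = mat_adjoint U *\<^sub>v col W k"
      using UH W k by (intro col_mult2[of _ m n _ m]) auto
    ultimately show "col (U * (mat_adjoint U * W)) k = col W k" using z by simp
  qed (use U W in auto)
  have ZZ: "mat_adjoint Z * Z = 1\<^sub>m m"
  proof -
    have "mat_adjoint Z = mat_adjoint W * U" using Zdef adj_mult[OF UH W] by simp
    then have "mat_adjoint Z * Z = mat_adjoint W * U * (mat_adjoint U * W)" using Zdef by simp
    also have "\<dots> = mat_adjoint W * (U * (mat_adjoint U * W))"
      using W U UH by (intro assoc_mult_mat[of _ m n _ m _ m]) auto
    also have "\<dots> = 1\<^sub>m m" using UUW WW by simp
    finally show ?thesis .
  qed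
  then show "mat_adjoint Z * Z = 1\<^sub>m m" .
  have ZZ2: "Z * mat_adjoint Z = 1\<^sub>m m" using mat_mult_left_right_inverse[OF ZH Z ZZ] .
  then show "Z * mat_adjoint Z = 1\<^sub>m m" .
  define B where "B = \<mu> \<cdot>\<^sub>m 1\<^sub>m m - mat_adjoint U * A * U"
  have B: "B \<in> carrier_mat m m" unfolding B_def using UH A U by auto
  have UAU: "mat_adjoint U * A * U \<in> carrier_mat m m" using UH A U by auto
  have "(mat_adjoint U * A * U) * Z = mat_adjoint U * A * (U * (mat_adjoint U * W))"
    unfolding Zdef using UH A U W by (intro assoc_mult_mat[of _ m n _ m _ m]) auto
  also have "\<dots> = mat_adjoint U * (A * W)" using UUW UH A W by (simp add: assoc_mult_mat[of _ m n _ n _ m])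
  also have "\<dots> = Z * dmat m lam" unfolding AW Zdef using UH W by (simp add: assoc_mult_mat[of _ m n _ m _ m])
  finally have UAUZ: "(mat_adjoint U * A * U) * Z = Z * dmat m lam" .
  have BZ: "B * Z = Z * dmat m (\<lambda>k. \<mu> - lam k)"
  proof -
    have "B * Z = (\<mu> \<cdot>\<^sub>m 1\<^sub>m m) * Z - (mat_adjoint U * A * U) * Z"
      unfolding B_def using UAU Z by (intro minus_mult_distrib_mat[of _ m m]) auto
    also have "\<dots> = \<mu> \<cdot>\<^sub>m Z - Z * dmat m lam"
      using Z UAUZ by (simp add: mult_smult_assoc_mat[of _ m m _ m])
    also have "\<dots> = Z * dmat m (\<lambda>k. \<mu> - lam k)"
      using Z by (simp add: mult_dmat[OF Z]) (rule eq_matI, auto simp: algebra_simps)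
    finally show ?thesis .
  qed
  have Beq: "B = Z * dmat m (\<lambda>k. \<mu> - lam k) * mat_adjoint Z"
  proof -
    have "B = B * (Z * mat_adjoint Z)" using ZZ2 B by simp
    also have "\<dots> = (B * Z) * mat_adjoint Z" using B Z ZH by (simp add: assoc_mult_mat[of _ m m _ m _ m])
    finally show ?thesis using BZ by simp
  qed
  define C where "C = Z * dmat m (\<lambda>k. 1 / (\<mu> - lam k)) * mat_adjoint Z"
  have C: "C \<in> carrier_mat m m" unfolding C_def using Z ZH by auto
  have prod: "Z * dmat m d1 * mat_adjoint Z * (Z * dmat m d2 * mat_adjoint Z) = Z * dmat m (\<lambda>k. d1 k * d2 k) * mat_adjoint Z"
    for d1 d2
  proof -
    have as: "\<And>X Y V. X \<in> carrier_mat m m \<Longrightarrow> Y \<in> carrier_mat m m \<Longrightarrow> V \<in> carrier_mat m m \<Longrightarrow> X * Y * V = X * (Y * V)"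
      by (rule assoc_mult_mat)
    have mc: "\<And>X Y. X \<in> carrier_mat m m \<Longrightarrow> Y \<in> carrier_mat m m \<Longrightarrow> X * Y \<in> carrier_mat m m"
      by (rule mult_carrier_mat)
    have canc: "mat_adjoint Z * (Z * X) = X" if "X \<in> carrier_mat m m" for X
      using as[OF ZH Z that] ZZ that by simp
    have "Z * dmat m d1 * mat_adjoint Z * (Z * dmat m d2 * mat_adjoint Z)
        = Z * (dmat m d1 * (mat_adjoint Z * (Z * (dmat m d2 * mat_adjoint Z))))"
      using Z ZH by (simp add: as mc)
    also have "\<dots> = Z * (dmat m d1 * dmat m d2 * mat_adjoint Z)"
      using ZH by (simp add: canc as mc)
    also have "\<dots> = Z * dmat m (\<lambda>k. d1 k * d2 k) * mat_adjoint Z"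
      using Z ZH by (simp add: as mc dmat_mult_dmat)
    finally show ?thesis .
  qed
  have one: "dmat m (\<lambda>k. (\<mu> - lam k) * (1 / (\<mu> - lam k))) = 1\<^sub>m m"
    "dmat m (\<lambda>k. (1 / (\<mu> - lam k)) * (\<mu> - lam k)) = 1\<^sub>m m"
    using ne by (auto intro!: dmat_one)
  have BC: "B * C = 1\<^sub>m m" unfolding Beq C_def prod one using ZZ2 Z by simp
  have CB: "C * B = 1\<^sub>m m" unfolding Beq C_def prod one using ZZ2 Z by simp
  have "mat_inv B = C"
  proof -
    have ex: "\<exists>C. C \<in> carrier_mat (dim_row B) (dim_row B) \<and> B * C = 1\<^sub>m (dim_row B) \<and> C * B = 1\<^sub>m (dim_row B)"
      using B C BC CB by auto
    define C' where "C' = mat_inv B"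
    have C': "C' \<in> carrier_mat m m" "B * C' = 1\<^sub>m m" "C' * B = 1\<^sub>m m"
      using someI_ex[OF ex] B unfolding C'_def mat_inv_def by auto
    have "C' = C' * (B * C)" using BC C' by simp
    also have "\<dots> = (C' * B) * C" using assoc_mult_mat[OF C'(1) B C] by simp
    also have "\<dots> = C" using C' C by simp
    finally show ?thesis unfolding C'_def .
  qed
  then show "mat_inv (\<mu> \<cdot>\<^sub>m 1\<^sub>m m - mat_adjoint U * A * U) = Z * dmat m (\<lambda>k. 1 / (\<mu> - lam k)) * mat_adjoint Z"
    unfolding B_def C_def .
qed

lemma tt_carrier[simp]: "tridiag_toeplitz n a b d \<in> carrier_mat n n"
  unfolding tridiag_toeplitz_def by simp

lemma tt_dims[simp]: "dim_row (tridiag_toeplitz n a b d) = n" "dim_col (tridiag_toeplitz n a b d) = n"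
  unfolding tridiag_toeplitz_def by simp_all

lemma tt_index: "i < n \<Longrightarrow> j < n \<Longrightarrow> tridiag_toeplitz n a b d $$ (i,j) =
   (if i = j then b else if j = i + 1 then d else if i = j + 1 then a else 0)"
  unfolding tridiag_toeplitz_def by simp

lemma tt_adj: "mat_adjoint (tridiag_toeplitz n a b d) = tridiag_toeplitz n (cnj d) (cnj b) (cnj a)"
  by (rule eq_matI) (auto simp: tt_index)

lemma tt_normal_mod:
  assumes "n \<ge> 2" "normal_mat (tridiag_toeplitz n a b d)"
  shows "cmod a = cmod d"
proof -
  let ?T = "tridiag_toeplitz n a b d"
  have n0: "0 < n" "1 < n" using assms by auto
  have e: "(?T * mat_adjoint ?T) $$ (0,0) = (mat_adjoint ?T * ?T) $$ (0,0)"
    using assms(2) unfolding normal_mat_def by simp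
  have l: "(?T * mat_adjoint ?T) $$ (0,0) = (\<Sum>l<n. ?T $$ (0,l) * cnj (?T $$ (0,l)))"
    using n0 by (simp add: scalar_prod_def row_def col_def lessThan_atLeast0)
  have r: "(mat_adjoint ?T * ?T) $$ (0,0) = (\<Sum>l<n. cnj (?T $$ (l,0)) * ?T $$ (l,0))"
    using n0 by (simp add: scalar_prod_def row_def col_def lessThan_atLeast0)
  have S: "{..<n} = {0,1} \<union> {2..<n}" using n0 by auto
  have l2: "(\<Sum>l<n. ?T $$ (0,l) * cnj (?T $$ (0,l))) = b * cnj b + d * cnj d"
    unfolding S using n0 by (subst sum.union_disjoint) (auto simp: tt_index intro!: sum.neutral)
  have r2: "(\<Sum>l<n. cnj (?T $$ (l,0)) * ?T $$ (l,0)) = cnj b * b + cnj a * a"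
    unfolding S using n0 by (subst sum.union_disjoint) (auto simp: tt_index intro!: sum.neutral)
  have "d * cnj d = a * cnj a" using e l r l2 r2 by (simp add: mult.commute)
  then have "complex_of_real ((cmod d)\<^sup>2) = complex_of_real ((cmod a)\<^sup>2)"
    by (simp only: complex_norm_square)
  then have "(cmod d)\<^sup>2 = (cmod a)\<^sup>2" using of_real_eq_iff by blast
  then show ?thesis by (simp add: power2_eq_iff_nonneg)
qed

definition sv :: "nat \<Rightarrow> complex \<Rightarrow> real \<Rightarrow> complex vec" where
  "sv n r \<theta> = vec n (\<lambda>k. r ^ k * complex_of_real (sin (real (k + 1) * \<theta>)))"

lemma sv_carrier[simp]: "sv n r \<theta> \<in> carrier_vec n" "dim_vec (sv n r \<theta>) = n"
  unfolding sv_def by auto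

lemma tt_eig:
  assumes r: "r \<noteq> 0" and a: "a = e * r" and d: "d * r = e" and z: "sin (real (n + 1) * \<theta>) = 0"
  shows "tridiag_toeplitz n a b d *\<^sub>v sv n r \<theta> = (b + 2 * e * complex_of_real (cos \<theta>)) \<cdot>\<^sub>v sv n r \<theta>"
proof (rule eq_vecI)
  show "dim_vec (tridiag_toeplitz n a b d *\<^sub>v sv n r \<theta>) = dim_vec ((b + 2 * e * complex_of_real (cos \<theta>)) \<cdot>\<^sub>v sv n r \<theta>)"
    by simp
  fix k assume "k < dim_vec ((b + 2 * e * complex_of_real (cos \<theta>)) \<cdot>\<^sub>v sv n r \<theta>)"
  then have k: "k < n" by simp
  define sn where "sn = (\<lambda>j::nat. complex_of_real (sin (real j * \<theta>)))"
  have vl: "l < n \<Longrightarrow> sv n r \<theta> $ l = r ^ l * sn (l + 1)" for l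
    unfolding sv_def sn_def by simp
  have split: "tridiag_toeplitz n a b d $$ (k,l) * sv n r \<theta> $ l =
      (if l = k then b * (r ^ l * sn (l + 1)) else 0) + (if l = k + 1 then d * (r ^ l * sn (l + 1)) else 0)
      + (if k = l + 1 then a * (r ^ l * sn (l + 1)) else 0)" if "l < n" for l
    using that k by (auto simp: tt_index vl)
  have S1: "(tridiag_toeplitz n a b d *\<^sub>v sv n r \<theta>) $ k = (\<Sum>l<n. tridiag_toeplitz n a b d $$ (k,l) * sv n r \<theta> $ l)"
    using k by (simp add: scalar_prod_def row_def lessThan_atLeast0)
  have S2: "(\<Sum>l<n. tridiag_toeplitz n a b d $$ (k,l) * sv n r \<theta> $ l) = (\<Sum>l<n. (if l = k then b * (r ^ l * sn (l + 1)) else 0) + (if l = k + 1 then d * (r ^ l * sn (l + 1)) else 0)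
      + (if k = l + 1 then a * (r ^ l * sn (l + 1)) else 0))"
    by (rule sum.cong) (auto simp: split)
  have S3: "(\<Sum>l<n. (if l = k then b * (r ^ l * sn (l + 1)) else 0) + (if l = k + 1 then d * (r ^ l * sn (l + 1)) else 0)
      + (if k = l + 1 then a * (r ^ l * sn (l + 1)) else 0)) = b * (r ^ k * sn (k + 1)) + (if k + 1 < n then d * (r ^ (k+1) * sn (k + 2)) else 0)
      + (\<Sum>l<n. if k = l + 1 then a * (r ^ l * sn (l + 1)) else 0)"
    using k by (simp add: sum.distrib)
  have S4: "(\<Sum>l<n. if k = l + 1 then a * (r ^ l * sn (l + 1)) else 0) = e * r ^ k * sn k"
  proof (cases k)
    case 0 then show ?thesis unfolding sn_def by simp
  next
    case (Suc k') 
    have "(\<Sum>l<n. if k = l + 1 then a * (r ^ l * sn (l + 1)) else 0) = (\<Sum>l<n. if l = k' then a * (r ^ l * sn (l + 1)) else 0)"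
      by (rule sum.cong) (auto simp: Suc)
    also have "\<dots> = a * (r ^ k' * sn k)" using Suc k by simp
    also have "\<dots> = e * r ^ k * sn k" using Suc a by simp
    finally show ?thesis .
  qed
  have S5: "(if k + 1 < n then d * (r ^ (k+1) * sn (k + 2)) else 0) = e * r ^ k * sn (k + 2)"
  proof (cases "k + 1 < n")
    case True 
    have "d * (r ^ (k+1) * sn (k + 2)) = (d * r) * r ^ k * sn (k + 2)" by simp
    then show ?thesis using True d by simp
  next
    case False then have "real (k + 2) = real (n + 1)" using k by simp
    then have "sn (k + 2) = 0" unfolding sn_def using z by simp
    then show ?thesis using False by simp
  qed
  have S6: "sn k + sn (k + 2) = 2 * sn (k + 1) * complex_of_real (cos \<theta>)"
  proof -
    have "sin (real k * \<theta>) + sin (real (k + 2) * \<theta>) = 2 * sin (real (k + 1) * \<theta>) * cos \<theta>"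
    proof -
      have 1: "real k * \<theta> = real (k + 1) * \<theta> - \<theta>" "real (k + 2) * \<theta> = real (k + 1) * \<theta> + \<theta>"
        by (simp_all add: algebra_simps)
      show ?thesis unfolding 1 sin_diff sin_add by simp
    qed
    then have "complex_of_real (sin (real k * \<theta>) + sin (real (k + 2) * \<theta>)) = complex_of_real (2 * sin (real (k + 1) * \<theta>) * cos \<theta>)"
      by simp
    then show ?thesis unfolding sn_def by simp
  qed
  have "(tridiag_toeplitz n a b d *\<^sub>v sv n r \<theta>) $ k = b * (r ^ k * sn (k + 1)) + e * r ^ k * (sn k + sn (k + 2))"
    unfolding S1 S2 S3 S4 S5 by (simp add: algebra_simps)
  also have "\<dots> = (b + 2 * e * complex_of_real (cos \<theta>)) * (r ^ k * sn (k + 1))"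
    unfolding S6 by (simp add: algebra_simps)
  also have "\<dots> = ((b + 2 * e * complex_of_real (cos \<theta>)) \<cdot>\<^sub>v sv n r \<theta>) $ k"
    using k vl by simp
  finally show "(tridiag_toeplitz n a b d *\<^sub>v sv n r \<theta>) $ k = ((b + 2 * e * complex_of_real (cos \<theta>)) \<cdot>\<^sub>v sv n r \<theta>) $ k" .
qed

lemma sin_le_sin: assumes "0 \<le> a" "a \<le> b" "a + b \<le> pi" shows "sin a \<le> sin b"
proof -
  have "sin b - sin a = 2 * sin ((b - a) / 2) * cos ((b + a) / 2)" by (rule sin_diff_sin)
  moreover have "0 \<le> sin ((b - a) / 2)" using assms by (intro sin_ge_zero) auto
  moreover have "0 \<le> cos ((b + a) / 2)" using assms by (intro cos_ge_zero) auto
  ultimately have "sin b - sin a \<ge> 0" by simp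
  then show ?thesis by simp
qed

locale trg =
  fixes n :: nat
  assumes n2: "n \<ge> 2"
begin

definition "al = pi / (2 * real (n + 1))"

lemma al_pos: "al > 0" unfolding al_def by simp

lemma al_pi: "2 * real (n + 1) * al = pi" unfolding al_def by simp

lemma sinle: assumes "0 \<le> k1" "k1 \<le> k2" "k1 + k2 \<le> 2 * real (n + 1)"
  shows "sin (k1 * al) \<le> sin (k2 * al)"
proof (rule sin_le_sin)
  show "0 \<le> k1 * al" using assms al_pos by simp
  show "k1 * al \<le> k2 * al" using assms al_pos by (simp add: mult_right_mono)
  have "(k1 + k2) * al \<le> 2 * real (n + 1) * al" using assms al_pos by (intro mult_right_mono) auto
  then show "k1 * al + k2 * al \<le> pi" using al_pi by (simp add: algebra_simps)
qed

lemma sinpos: assumes "0 < k" "k < 2 * real (n + 1)" shows "sin (k * al) > 0"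
proof (rule sin_gt_zero)
  show "0 < k * al" using assms al_pos by simp
  have "k * al < 2 * real (n + 1) * al" using assms al_pos by (intro mult_strict_right_mono) auto
  then show "k * al < pi" using al_pi by simp
qed

lemma sinrefl: "sin (k * al) = sin ((2 * real (n + 1) - k) * al)"
proof -
  have "(2 * real (n + 1) - k) * al = pi - k * al" using al_pi by (simp add: algebra_simps)
  then show ?thesis by simp
qed

lemma th_eq: "real j * pi / real (n + 1) = (2 * real j) * al"
  unfolding al_def by (simp add: field_simps)

lemma neigh: "cos (real j * pi / real (n + 1)) - cos (real (j + 1) * pi / real (n + 1))
   = 2 * sin ((2 * real j + 1) * al) * sin al"
proof -
  have "cos (real j * pi / real (n + 1)) - cos (real (j + 1) * pi / real (n + 1))
     = 2 * sin ((real j * pi / real (n + 1) + real (j + 1) * pi / real (n + 1)) / 2)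
         * sin ((real (j + 1) * pi / real (n + 1) - real j * pi / real (n + 1)) / 2)"
    by (rule cos_diff_cos)
  moreover have "(real j * pi / real (n + 1) + real (j + 1) * pi / real (n + 1)) / 2 = (2 * real j + 1) * al"
    unfolding th_eq by (simp add: algebra_simps)
  moreover have "(real (j + 1) * pi / real (n + 1) - real j * pi / real (n + 1)) / 2 = al"
    unfolding th_eq by (simp add: algebra_simps)
  ultimately show ?thesis by simp
qed

lemma cosmono: assumes "i \<le> j" "j \<le> n + 1"
  shows "cos (real j * pi / real (n + 1)) \<le> cos (real i * pi / real (n + 1))"
proof (rule cos_monotone_0_pi_le)
  show "0 \<le> real i * pi / real (n + 1)" by simp
  show "real i * pi / real (n + 1) \<le> real j * pi / real (n + 1)"
    using assms by (simp add: divide_right_mono mult_right_mono)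
  show "real j * pi / real (n + 1) \<le> pi" using assms by (simp add: pos_divide_le_eq)
qed

definition "gm h = (if (1 < h \<and> 2 * h \<le> n) \<or> h = n then sin ((2 * real h - 1) * al) else sin ((2 * real h + 1) * al))"

abbreviation "gap h j \<equiv> \<bar>cos (real h * pi / real (n + 1)) - cos (real j * pi / real (n + 1))\<bar>"

lemma T1: assumes "1 \<le> h" "h \<le> n" "1 \<le> j" "j \<le> n" "j \<noteq> h"
  shows "2 * sin al * gm h \<le> gap h j"
proof (cases "h < j")
  case True
  have "cos (real j * pi / real (n + 1)) \<le> cos (real (h + 1) * pi / real (n + 1))"
    using True assms by (intro cosmono) auto
  moreover have "cos (real (h + 1) * pi / real (n + 1)) \<le> cos (real h * pi / real (n + 1))"
    using assms by (intro cosmono) auto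
  ultimately have g: "gap h j \<ge> 2 * sin ((2 * real h + 1) * al) * sin al"
    using neigh[of h] by linarith
  have "gm h \<le> sin ((2 * real h + 1) * al)"
  proof (cases "(1 < h \<and> 2 * h \<le> n) \<or> h = n")
    case c: True
    then have "2 * h \<le> n" using True assms by auto
    then have "sin ((2 * real h - 1) * al) \<le> sin ((2 * real h + 1) * al)"
      using assms by (intro sinle) auto
    then show ?thesis using c unfolding gm_def by simp
  next
    case False then show ?thesis unfolding gm_def by auto
  qed
  moreover have "sin al > 0" using sinpos[of 1] by simp
  ultimately have "2 * sin al * gm h \<le> 2 * sin al * sin ((2 * real h + 1) * al)" by (intro mult_left_mono) auto
  then show ?thesis using g by (simp add: algebra_simps)
next
  case False
  then have jh: "j < h" using assms by simp
  define h' where "h' = h - 1"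
  have h': "h = h' + 1" using assms unfolding h'_def by simp
  have "cos (real h * pi / real (n + 1)) \<le> cos (real h' * pi / real (n + 1))"
    using h' assms by (intro cosmono) auto
  moreover have "cos (real h' * pi / real (n + 1)) \<le> cos (real j * pi / real (n + 1))"
    using h' jh assms by (intro cosmono) auto
  ultimately have g: "gap h j \<ge> 2 * sin ((2 * real h - 1) * al) * sin al"
    using neigh[of h'] h' by (simp add: algebra_simps)
  have "gm h \<le> sin ((2 * real h - 1) * al)"
  proof (cases "(1 < h \<and> 2 * h \<le> n) \<or> h = n")
    case True then show ?thesis unfolding gm_def by simp
  next
    case c: False
    then have "n + 1 \<le> 2 * h" "h < n" using jh assms by auto
    then have "sin ((2 * real (n + 1) - (2 * real h + 1)) * al) \<le> sin ((2 * real h - 1) * al)"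
      by (intro sinle) auto
    then show ?thesis using c sinrefl[of "2 * real h + 1"] unfolding gm_def by simp
  qed
  moreover have "sin al > 0" using sinpos[of 1] by simp
  ultimately have "2 * sin al * gm h \<le> 2 * sin al * sin ((2 * real h - 1) * al)" by (intro mult_left_mono) auto
  then show ?thesis using g by (simp add: algebra_simps)
qed

lemma T2: assumes "1 \<le> h" "h \<le> n"
  shows "\<exists>j. 1 \<le> j \<and> j \<le> n \<and> j \<noteq> h \<and> gap h j = 2 * sin al * gm h"
proof (cases "(1 < h \<and> 2 * h \<le> n) \<or> h = n")
  case True
  then have "h \<ge> 2" using assms n2 by auto
  define h' where "h' = h - 1"
  have h': "h = h' + 1" "h' \<ge> 1" using \<open>h \<ge> 2\<close> unfolding h'_def by simp_all
  have "cos (real h * pi / real (n + 1)) \<le> cos (real h' * pi / real (n + 1))"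
    using h' assms by (intro cosmono) auto
  then have "gap h h' = 2 * sin ((2 * real h - 1) * al) * sin al"
    using neigh[of h'] h' by (simp add: algebra_simps)
  then show ?thesis using True h' assms unfolding gm_def by (intro exI[of _ h']) (auto simp: mult.commute)
next
  case False
  then have "h < n" using assms by auto
  have "cos (real (h + 1) * pi / real (n + 1)) \<le> cos (real h * pi / real (n + 1))"
    using assms by (intro cosmono) auto
  then have "gap h (h + 1) = 2 * sin ((2 * real h + 1) * al) * sin al"
    using neigh[of h] by simp
  then show ?thesis using False \<open>h < n\<close> assms unfolding gm_def by (intro exI[of _ "h + 1"]) (auto simp: mult.commute)
qed

lemma T3: assumes "1 \<le> h" "h \<le> n" shows "gm h > 0"
  unfolding gm_def using assms by (auto intro!: sinpos)

lemma T4: assumes "1 \<le> h" "h \<le> n" shows "sin (3 * al) \<le> gm h"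
  unfolding gm_def using assms n2 by (auto intro!: sinle)

lemma T5: assumes "h \<in> {1, 2, n - 1, n}" shows "gm h = sin (3 * al)"
proof -
  have "gm h = sin (3 * al) \<or> gm h = sin ((2 * real n - 1) * al)"
    using assms n2 unfolding gm_def by (cases "n = 3") (auto simp: of_nat_diff)
  moreover have "sin ((2 * real n - 1) * al) = sin (3 * al)"
    using sinrefl[of 3] by (simp add: algebra_simps)
  ultimately show ?thesis by auto
qed

end


locale ttc = trg n for n :: nat +
  fixes \<sigma> \<delta> \<tau> :: complex
  assumes st: "\<sigma> * \<tau> \<noteq> 0" and md: "cmod \<sigma> = cmod \<tau>"
begin

definition "cc = csqrt (\<sigma> * \<tau>)"
definition "rho = cc / \<tau>"
definition "lamv j = \<delta> + 2 * cc * complex_of_real (cos (real j * pi / real (n + 1)))"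
definition "ev j = sv n rho (real j * pi / real (n + 1))"
definition "TT = tridiag_toeplitz n \<sigma> \<delta> \<tau>"

lemma ang_le: "j \<le> N \<Longrightarrow> 0 < N \<Longrightarrow> real j * pi / real N \<le> pi"
  by (simp add: pos_divide_le_eq)

lemma ang_lt: "j < N \<Longrightarrow> real j * pi / real N < pi"
  by (simp add: pos_divide_less_eq)

lemma tau0: "\<tau> \<noteq> 0" and sig0: "\<sigma> \<noteq> 0" using st by auto

lemma cc_sq: "cc * cc = \<sigma> * \<tau>"
  unfolding cc_def using power2_csqrt[of "\<sigma> * \<tau>"] by (simp add: power2_eq_square)

lemma cc0: "cc \<noteq> 0" unfolding cc_def using st by simp

lemma cmod_cc: "cmod cc = cmod \<sigma>"
proof -
  have "cmod cc = sqrt (cmod \<sigma> * cmod \<tau>)" unfolding cc_def by (simp add: norm_mult)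
  also have "\<dots> = cmod \<sigma>" using md by simp
  finally show ?thesis .
qed

lemma rho0: "rho \<noteq> 0" unfolding rho_def using cc0 tau0 by simp

lemma cmod_rho: "cmod rho = 1"
  unfolding rho_def using cmod_cc md tau0 by (simp add: norm_divide)

lemma rho_cnj: "cnj rho * rho = 1"
proof -
  have "complex_of_real ((cmod rho)\<^sup>2) = rho * cnj rho" by (rule complex_norm_square)
  then show ?thesis using cmod_rho by (simp add: mult.commute)
qed

lemma sig_eq: "\<sigma> = cc * rho"
  unfolding rho_def using cc_sq tau0 by (simp add: field_simps)

lemma tau_eq: "\<tau> * rho = cc"
  unfolding rho_def using tau0 by simp

lemma sin_int: "sin (real (n + 1) * (real j * pi / real (n + 1))) = 0"
proof -
  have "real (n + 1) * (real j * pi / real (n + 1)) = real j * pi" by simp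
  then show ?thesis by (simp add: sin_zero_iff_int2) 
qed

lemma E1: "TT *\<^sub>v ev j = lamv j \<cdot>\<^sub>v ev j"
  unfolding TT_def ev_def lamv_def
  by (rule tt_eig[OF rho0 sig_eq tau_eq sin_int])

lemma E2: "mat_adjoint TT *\<^sub>v ev j = cnj (lamv j) \<cdot>\<^sub>v ev j"
proof -
  have a: "cnj \<tau> = cnj cc * rho"
  proof -
    have "cnj \<tau> * cnj rho = cnj cc" using tau_eq by (metis complex_cnj_mult)
    then have "cnj \<tau> * (cnj rho * rho) = cnj cc * rho" by (simp add: mult.assoc)
    then show ?thesis using rho_cnj by simp
  qed
  have d: "cnj \<sigma> * rho = cnj cc"
  proof -
    have "cnj \<sigma> = cnj cc * cnj rho" using sig_eq complex_cnj_mult by metis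
    then show ?thesis using rho_cnj by (simp add: mult.assoc)
  qed
  have "mat_adjoint TT *\<^sub>v ev j = (cnj \<delta> + 2 * cnj cc * complex_of_real (cos (real j * pi / real (n + 1)))) \<cdot>\<^sub>v ev j"
    unfolding TT_def tt_adj ev_def by (rule tt_eig[OF rho0 a d sin_int])
  then show ?thesis unfolding lamv_def by simp
qed

lemma ev_carrier[simp]: "ev j \<in> carrier_vec n" "dim_vec (ev j) = n"
  unfolding ev_def by auto

lemma TT_carrier[simp]: "TT \<in> carrier_mat n n" unfolding TT_def by simp

lemma ev0: assumes "1 \<le> j" "j \<le> n" shows "ev j $ 0 \<noteq> 0"
proof -
  have "0 < real j * pi / real (n + 1)" using assms by simp
  moreover have "real j * pi / real (n + 1) < pi" using assms by (intro ang_lt) simp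
  ultimately have "sin (real j * pi / real (n + 1)) \<noteq> 0" using sin_gt_zero by force
  then show ?thesis unfolding ev_def sv_def using n2 by simp
qed

lemma ev_nz: assumes "1 \<le> j" "j \<le> n" shows "ev j \<noteq> 0\<^sub>v n"
  using ev0[OF assms] n2 by auto

lemma cos_inj: assumes "1 \<le> j" "j \<le> n" "1 \<le> k" "k \<le> n" "j \<noteq> k"
  shows "cos (real j * pi / real (n + 1)) \<noteq> cos (real k * pi / real (n + 1))"
proof
  assume "cos (real j * pi / real (n + 1)) = cos (real k * pi / real (n + 1))"
  moreover have "0 \<le> real j * pi / real (n + 1)" "real j * pi / real (n + 1) \<le> pi"
    "0 \<le> real k * pi / real (n + 1)" "real k * pi / real (n + 1) \<le> pi" using assms ang_le[of j "n+1"] ang_le[of k "n+1"] by simp_all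
  ultimately have "real j * pi / real (n + 1) = real k * pi / real (n + 1)" using cos_inj_pi by blast
  then show False using assms by simp
qed

lemma lam_ne: assumes "1 \<le> j" "j \<le> n" "1 \<le> k" "k \<le> n" "j \<noteq> k"
  shows "lamv j \<noteq> lamv k"
  using cos_inj[OF assms] cc0 unfolding lamv_def by simp

lemma E5: assumes "1 \<le> j" "j \<le> n" "1 \<le> k" "k \<le> n" "j \<noteq> k"
  shows "ev j \<bullet>c ev k = 0"
proof -
  have "(TT *\<^sub>v ev j) \<bullet>c ev k = ev j \<bullet>c (mat_adjoint TT *\<^sub>v ev k)"
    by (rule inner_adj[OF TT_carrier]) auto
  then have "lamv j * (ev j \<bullet>c ev k) = ev j \<bullet> (conjugate (cnj (lamv k) \<cdot>\<^sub>v ev k))"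
    unfolding E1 E2 by simp
  also have "conjugate (cnj (lamv k) \<cdot>\<^sub>v ev k) = lamv k \<cdot>\<^sub>v conjugate (ev k)"
    by (simp add: conjugate_smult_vec)
  finally have "lamv j * (ev j \<bullet>c ev k) = lamv k * (ev j \<bullet>c ev k)" by simp
  then show ?thesis using lam_ne[OF assms] by simp
qed

lemma E6: "cmod (lamv h - lamv j) = 2 * cmod \<sigma> * \<bar>cos (real h * pi / real (n + 1)) - cos (real j * pi / real (n + 1))\<bar>"
proof -
  have "lamv h - lamv j = 2 * cc * complex_of_real (cos (real h * pi / real (n + 1)) - cos (real j * pi / real (n + 1)))"
    unfolding lamv_def by (simp add: algebra_simps)
  then have "cmod (lamv h - lamv j) = cmod (2 * cc) * cmod (complex_of_real (cos (real h * pi / real (n + 1)) - cos (real j * pi / real (n + 1))))"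
    by (simp only: norm_mult)
  then show ?thesis by (simp only: norm_of_real norm_mult cmod_cc) simp
qed

end


lemma dmat_dims[simp]: "dim_row (dmat m d) = m" "dim_col (dmat m d) = m" unfolding dmat_def by simp_all

definition sel :: "nat \<Rightarrow> nat \<Rightarrow> nat" where "sel p k = (if k < p then k else Suc k)"
definition unsel :: "nat \<Rightarrow> nat \<Rightarrow> nat" where "unsel p j = (if j < p then j else j - 1)"

lemma sel_ne: "sel p k \<noteq> p" unfolding sel_def by auto
lemma sel_lt: "k < n - 1 \<Longrightarrow> p < n \<Longrightarrow> sel p k < n" unfolding sel_def by auto
lemma unsel_sel[simp]: "unsel p (sel p k) = k" unfolding sel_def unsel_def by auto
lemma sel_unsel: "j \<noteq> p \<Longrightarrow> sel p (unsel p j) = j" unfolding sel_def unsel_def by auto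
lemma unsel_lt: "j < n \<Longrightarrow> j \<noteq> p \<Longrightarrow> p < n \<Longrightarrow> unsel p j < n - 1" unfolding unsel_def by auto
lemma sel_inj: "sel p k = sel p k' \<longleftrightarrow> k = k'" by (metis unsel_sel)

lemma sel_bij: assumes "p < n" shows "bij_betw (sel p) {..<n - 1} ({..<n} - {p})"
proof (rule bij_betw_byWitness[where f' = "unsel p"])
  show "\<forall>a\<in>{..<n - 1}. unsel p (sel p a) = a" by simp
  show "\<forall>a'\<in>{..<n} - {p}. sel p (unsel p a') = a'" using sel_unsel by auto
  show "sel p ` {..<n - 1} \<subseteq> {..<n} - {p}" using assms sel_lt sel_ne by auto
  show "unsel p ` ({..<n} - {p}) \<subseteq> {..<n - 1}" using assms unsel_lt by auto
qed

lemma sum_sel: assumes "p < n" shows "(\<Sum>j<n. f j) = f p + (\<Sum>k<n - 1. f (sel p k))"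
proof -
  have "(\<Sum>j<n. f j) = f p + (\<Sum>j\<in>{..<n} - {p}. f j)"
    using assms by (simp add: sum.remove)
  also have "(\<Sum>j\<in>{..<n} - {p}. f j) = (\<Sum>k<n - 1. f (sel p k))"
    using sum.reindex_bij_betw[OF sel_bij[OF assms], of f] by simp
  finally show ?thesis .
qed

lemma cinner_smult: "u \<in> carrier_vec n \<Longrightarrow> w \<in> carrier_vec n \<Longrightarrow>
  (a \<cdot>\<^sub>v u) \<bullet>c (b \<cdot>\<^sub>v (w :: complex vec)) = a * cnj b * (u \<bullet>c w)"
  by (simp add: scalar_prod_def sum_distrib_left mult_ac)

lemma adj_mult_index: "i < dim_col W \<Longrightarrow> j < dim_col W \<Longrightarrow>
  (mat_adjoint W * W) $$ (i,j) = col W j \<bullet>c col (W :: complex mat) i"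
  by (simp add: scalar_prod_def row_def col_def mult.commute)

lemma mult_col_index: "i < dim_row A \<Longrightarrow> j < dim_col W \<Longrightarrow> (A * W) $$ (i,j) = (A *\<^sub>v col W j) $ i"
  by simp

lemma smult_one_mult_vec: "(\<mu> \<cdot>\<^sub>m 1\<^sub>m n) *\<^sub>v y = \<mu> \<cdot>\<^sub>v (y :: complex vec)" if "y \<in> carrier_vec n"
proof (rule eq_vecI)
  fix i assume "i < dim_vec (\<mu> \<cdot>\<^sub>v y)"
  then have i: "i < n" using that by simp
  have "((\<mu> \<cdot>\<^sub>m 1\<^sub>m n) *\<^sub>v y) $ i = (\<Sum>l<n. (if l = i then \<mu> * y $ l else 0))"
    using i that by (auto simp: scalar_prod_def row_def lessThan_atLeast0 mult_if0 if0_mult cong: if_cong)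
  then show "((\<mu> \<cdot>\<^sub>m 1\<^sub>m n) *\<^sub>v y) $ i = (\<mu> \<cdot>\<^sub>v y) $ i" using i that by simp
qed (use that in auto)


context ttc
begin

definition "nv j = vnorm (ev j)"
definition "wv j = (1 / complex_of_real (nv j)) \<cdot>\<^sub>v ev j"
definition "WW = mat n n (\<lambda>(i,j). wv (j + 1) $ i)"
definition "WS h = mat n (n - 1) (\<lambda>(i,k). wv (sel (h - 1) k + 1) $ i)"
definition "lamS h k = lamv (sel (h - 1) k + 1)"

lemma nv_pos: assumes "1 \<le> j" "j \<le> n" shows "nv j > 0"
proof -
  have "ev j \<bullet>c ev j \<noteq> 0" using ev_nz[OF assms] conjugate_square_eq_0_vec[of "ev j" n] by simp
  then have "vnorm (ev j) \<noteq> 0" unfolding cinner_self by simp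
  then show ?thesis unfolding nv_def using vnorm_nonneg[of "ev j"] by simp
qed

lemma wv_carrier[simp]: "wv j \<in> carrier_vec n" "dim_vec (wv j) = n" unfolding wv_def by auto

lemma wv_inner: assumes "1 \<le> j" "j \<le> n" "1 \<le> k" "k \<le> n"
  shows "wv j \<bullet>c wv k = (if j = k then 1 else 0)"
proof (cases "j = k")
  case True
  have "wv j \<bullet>c wv k = (1 / complex_of_real (nv j)) * (1 / complex_of_real (nv j)) * complex_of_real ((nv j)\<^sup>2)"
    unfolding wv_def True by (subst cinner_smult[of _ n]) (auto simp: cinner_self nv_def)
  also have "\<dots> = 1" using nv_pos[OF assms(1,2)] by (simp add: power2_eq_square)
  finally show ?thesis using True by simp
next
  case False
  then show ?thesis unfolding wv_def using E5[OF assms False] by (subst cinner_smult[of _ n]) auto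
qed

lemma TT_wv: "TT *\<^sub>v wv j = lamv j \<cdot>\<^sub>v wv j"
  unfolding wv_def by (simp add: mult_mat_vec[OF TT_carrier] E1 smult_smult_assoc mult.commute)

lemma WW_carrier[simp]: "WW \<in> carrier_mat n n" unfolding WW_def by simp
lemma TT_dims[simp]: "dim_row TT = n" "dim_col TT = n" unfolding TT_def by simp_all
lemma WW_dims[simp]: "dim_row WW = n" "dim_col WW = n" unfolding WW_def by simp_all
lemma WS_dims[simp]: "dim_row (WS h) = n" "dim_col (WS h) = n - 1" unfolding WS_def by simp_all

lemma col_WW: "j < n \<Longrightarrow> col WW j = wv (j + 1)"
  unfolding WW_def by (rule eq_vecI) auto

lemma WS_carrier[simp]: "WS h \<in> carrier_mat n (n - 1)" unfolding WS_def by simp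

lemma col_WS: "k < n - 1 \<Longrightarrow> col (WS h) k = wv (sel (h - 1) k + 1)"
  unfolding WS_def by (rule eq_vecI) auto

lemma WW_unit: "mat_adjoint WW * WW = 1\<^sub>m n"
proof (rule eq_matI)
  fix i j assume "i < dim_row (1\<^sub>m n :: complex mat)" "j < dim_col (1\<^sub>m n :: complex mat)"
  then have ij: "i < n" "j < n" by auto
  then show "(mat_adjoint WW * WW) $$ (i, j) = 1\<^sub>m n $$ (i, j)"
    by (subst adj_mult_index) (auto simp: col_WW wv_inner)
qed auto

lemma WW_unit2: "WW * mat_adjoint WW = 1\<^sub>m n"
  using mat_mult_left_right_inverse[OF adj_carrier[OF WW_carrier] WW_carrier WW_unit] .

lemma WS_unit: assumes "1 \<le> h" "h \<le> n" shows "mat_adjoint (WS h) * WS h = 1\<^sub>m (n - 1)"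
proof (rule eq_matI)
  fix i j assume "i < dim_row (1\<^sub>m (n - 1) :: complex mat)" "j < dim_col (1\<^sub>m (n - 1) :: complex mat)"
  then have ij: "i < n - 1" "j < n - 1" by auto
  have "sel (h - 1) i < n" "sel (h - 1) j < n" using ij assms sel_lt by auto
  then show "(mat_adjoint (WS h) * WS h) $$ (i, j) = 1\<^sub>m (n - 1) $$ (i, j)"
    using ij by (subst adj_mult_index) (auto simp: col_WS wv_inner sel_inj)
qed auto

lemma TT_WW: "TT * WW = WW * dmat n (\<lambda>j. lamv (j + 1))"
proof (rule eq_matI)
  fix i j assume "i < dim_row (WW * dmat n (\<lambda>j. lamv (j + 1)))" "j < dim_col (WW * dmat n (\<lambda>j. lamv (j + 1)))"
  then have ij: "i < n" "j < n" by auto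
  have "(TT * WW) $$ (i, j) = (TT *\<^sub>v col WW j) $ i" using ij by simp
  also have "\<dots> = lamv (j + 1) * wv (j + 1) $ i" using ij by (simp add: col_WW TT_wv)
  also have "\<dots> = (WW * dmat n (\<lambda>j. lamv (j + 1))) $$ (i, j)"
    unfolding mult_dmat[OF WW_carrier] using ij by (simp add: WW_def)
  finally show "(TT * WW) $$ (i, j) = (WW * dmat n (\<lambda>j. lamv (j + 1))) $$ (i, j)" .
qed auto

lemma TT_WS: assumes "1 \<le> h" "h \<le> n" shows "TT * WS h = WS h * dmat (n - 1) (lamS h)"
proof (rule eq_matI)
  fix i k assume "i < dim_row (WS h * dmat (n - 1) (lamS h))" "k < dim_col (WS h * dmat (n - 1) (lamS h))"
  then have ik: "i < n" "k < n - 1" by auto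
  have "(TT * WS h) $$ (i, k) = (TT *\<^sub>v col (WS h) k) $ i" using ik by simp
  also have "\<dots> = lamS h k * wv (sel (h - 1) k + 1) $ i" using ik by (simp add: col_WS TT_wv lamS_def)
  also have "\<dots> = (WS h * dmat (n - 1) (lamS h)) $$ (i, k)"
    unfolding mult_dmat[OF WS_carrier] using ik by (simp add: WS_def lamS_def)
  finally show "(TT * WS h) $$ (i, k) = (WS h * dmat (n - 1) (lamS h)) $$ (i, k)" .
qed auto

end


context ttc
begin

lemma shift_WW: fixes u :: "complex vec" assumes u: "u \<in> carrier_vec n"
  shows "(TT - \<mu> \<cdot>\<^sub>m 1\<^sub>m n) *\<^sub>v (WW *\<^sub>v u) = WW *\<^sub>v vec n (\<lambda>j. (lamv (j + 1) - \<mu>) * u $ j)"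
proof -
  have y: "WW *\<^sub>v u \<in> carrier_vec n" by (rule carrier_vecI) simp
  have "(TT - \<mu> \<cdot>\<^sub>m 1\<^sub>m n) *\<^sub>v (WW *\<^sub>v u) = TT *\<^sub>v (WW *\<^sub>v u) - (\<mu> \<cdot>\<^sub>m 1\<^sub>m n) *\<^sub>v (WW *\<^sub>v u)"
    using y by (intro minus_mult_distrib_mat_vec[of _ n n]) auto
  also have "TT *\<^sub>v (WW *\<^sub>v u) = (TT * WW) *\<^sub>v u"
    using u by (intro assoc_mult_mat_vec[symmetric, of _ n n _ n]) auto
  also have "\<dots> = WW *\<^sub>v (dmat n (\<lambda>j. lamv (j + 1)) *\<^sub>v u)"
    unfolding TT_WW using u by (intro assoc_mult_mat_vec[of _ n n _ n]) auto
  also have "(\<mu> \<cdot>\<^sub>m 1\<^sub>m n) *\<^sub>v (WW *\<^sub>v u) = WW *\<^sub>v (\<mu> \<cdot>\<^sub>v u)"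
    using y u by (simp add: smult_one_mult_vec mult_mat_vec[OF WW_carrier])
  also have "WW *\<^sub>v (dmat n (\<lambda>j. lamv (j + 1)) *\<^sub>v u) - WW *\<^sub>v (\<mu> \<cdot>\<^sub>v u)
      = WW *\<^sub>v (dmat n (\<lambda>j. lamv (j + 1)) *\<^sub>v u - \<mu> \<cdot>\<^sub>v u)"
    using u mult_mat_vec_carrier[OF dmat_carrier u] by (intro mult_minus_distrib_mat_vec[symmetric, of _ n n]) auto
  also have "dmat n (\<lambda>j. lamv (j + 1)) *\<^sub>v u - \<mu> \<cdot>\<^sub>v u = vec n (\<lambda>j. (lamv (j + 1) - \<mu>) * u $ j)"
    using u by (intro eq_vecI) (auto simp: dmat_mult_vec algebra_simps)
  finally show ?thesis .
qed

lemma WW_WS: fixes u :: "complex vec" assumes "1 \<le> h" "h \<le> n" "u \<in> carrier_vec n" "u $ (h - 1) = 0"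
  shows "WW *\<^sub>v u = WS h *\<^sub>v vec (n - 1) (\<lambda>k. u $ sel (h - 1) k)"
proof (rule eq_vecI)
  fix i assume "i < dim_vec (WS h *\<^sub>v vec (n - 1) (\<lambda>k. u $ sel (h - 1) k))"
  then have i: "i < n" by simp
  have p: "h - 1 < n" using assms by simp
  have "(WW *\<^sub>v u) $ i = (\<Sum>j<n. WW $$ (i, j) * u $ j)"
    using i assms(3) by (simp add: scalar_prod_def row_def lessThan_atLeast0)
  also have "\<dots> = (\<Sum>k<n - 1. WW $$ (i, sel (h - 1) k) * u $ sel (h - 1) k)"
    using sum_sel[OF p, of "\<lambda>j. WW $$ (i, j) * u $ j"] assms(4) by simp
  also have "\<dots> = (WS h *\<^sub>v vec (n - 1) (\<lambda>k. u $ sel (h - 1) k)) $ i"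
    using i p sel_lt by (auto simp: scalar_prod_def row_def lessThan_atLeast0 WW_def WS_def intro!: sum.cong)
  finally show "(WW *\<^sub>v u) $ i = (WS h *\<^sub>v vec (n - 1) (\<lambda>k. u $ sel (h - 1) k)) $ i" .
qed simp

lemma range_ex: assumes h: "1 \<le> h" "h \<le> n"
  shows "range_basis TT (lamv h) (WS h)"
proof -
  let ?\<mu> = "lamv h"
  let ?p = "h - 1"
  have p: "?p < n" using h by simp
  have lp: "lamv (?p + 1) = ?\<mu>" using h by simp
  have "{(TT - ?\<mu> \<cdot>\<^sub>m 1\<^sub>m n) *\<^sub>v y | y. y \<in> carrier_vec n} = {WS h *\<^sub>v z | z. z \<in> carrier_vec (n - 1)}"
  proof (intro equalityI subsetI)
    fix v assume "v \<in> {(TT - ?\<mu> \<cdot>\<^sub>m 1\<^sub>m n) *\<^sub>v y | y. y \<in> carrier_vec n}"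
    then obtain y where y: "y \<in> carrier_vec n" and v: "v = (TT - ?\<mu> \<cdot>\<^sub>m 1\<^sub>m n) *\<^sub>v y" by auto
    define u where "u = mat_adjoint WW *\<^sub>v y"
    have u: "u \<in> carrier_vec n" unfolding u_def by (rule carrier_vecI) simp
    have "WW *\<^sub>v u = (WW * mat_adjoint WW) *\<^sub>v y"
      unfolding u_def using y by (intro assoc_mult_mat_vec[symmetric, of _ n n _ n]) auto
    also have "\<dots> = y" using y by (simp add: WW_unit2)
    finally have yu: "y = WW *\<^sub>v u" by simp
    define u' where "u' = vec n (\<lambda>j. (lamv (j + 1) - ?\<mu>) * u $ j)"
    have u': "u' \<in> carrier_vec n" "u' $ ?p = 0" unfolding u'_def using p lp by auto
    have "v = WW *\<^sub>v u'" unfolding v yu u'_def by (rule shift_WW[OF u])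
    also have "\<dots> = WS h *\<^sub>v vec (n - 1) (\<lambda>k. u' $ sel ?p k)" by (rule WW_WS[OF h u'])
    finally show "v \<in> {WS h *\<^sub>v z | z. z \<in> carrier_vec (n - 1)}" by auto
  next
    fix v assume "v \<in> {WS h *\<^sub>v z | z. z \<in> carrier_vec (n - 1)}"
    then obtain z where z: "z \<in> carrier_vec (n - 1)" and v: "v = WS h *\<^sub>v z" by auto
    define u' where "u' = vec n (\<lambda>j. if j = ?p then 0 else z $ unsel ?p j)"
    have u': "u' \<in> carrier_vec n" "u' $ ?p = 0" unfolding u'_def using p by auto
    have zz: "vec (n - 1) (\<lambda>k. u' $ sel ?p k) = z"
      using z p sel_lt sel_ne unfolding u'_def by (intro eq_vecI) auto
    have vW: "v = WW *\<^sub>v u'" unfolding v using WW_WS[OF h u'] zz by simp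
    define g where "g = vec n (\<lambda>j. u' $ j / (lamv (j + 1) - ?\<mu>))"
    define y where "y = WW *\<^sub>v g"
    have "(TT - ?\<mu> \<cdot>\<^sub>m 1\<^sub>m n) *\<^sub>v y = WW *\<^sub>v vec n (\<lambda>j. (lamv (j + 1) - ?\<mu>) * g $ j)"
      unfolding y_def by (rule shift_WW) (simp add: g_def)
    also have "vec n (\<lambda>j. (lamv (j + 1) - ?\<mu>) * g $ j) = u'"
    proof (rule eq_vecI)
      fix j assume "j < dim_vec u'"
      then have j: "j < n" using u' by simp
      show "vec n (\<lambda>j. (lamv (j + 1) - ?\<mu>) * g $ j) $ j = u' $ j"
      proof (cases "j = ?p")
        case True then show ?thesis using j u' by (simp add: g_def)
      next
        case False
        then have "lamv (j + 1) \<noteq> ?\<mu>" using lam_ne[of "j + 1" h] j h by auto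
        then show ?thesis using j by (simp add: g_def)
      qed
    qed (use u' in simp)
    finally have "v = (TT - ?\<mu> \<cdot>\<^sub>m 1\<^sub>m n) *\<^sub>v y" using vW by simp
    moreover have "y \<in> carrier_vec n" unfolding y_def by (rule carrier_vecI) simp
    ultimately show "v \<in> {(TT - ?\<mu> \<cdot>\<^sub>m 1\<^sub>m n) *\<^sub>v y | y. y \<in> carrier_vec n}" by auto
  qed
  then show ?thesis unfolding range_basis_def Let_def using WS_unit[OF h] WS_carrier[of h] by simp
qed

end


context ttc
begin

lemma shift_wv: "(TT - \<mu> \<cdot>\<^sub>m 1\<^sub>m n) *\<^sub>v (c \<cdot>\<^sub>v wv j) = (c * (lamv j - \<mu>)) \<cdot>\<^sub>v wv j"
proof -
  have "(TT - \<mu> \<cdot>\<^sub>m 1\<^sub>m n) *\<^sub>v (c \<cdot>\<^sub>v wv j) = TT *\<^sub>v (c \<cdot>\<^sub>v wv j) - (\<mu> \<cdot>\<^sub>m 1\<^sub>m n) *\<^sub>v (c \<cdot>\<^sub>v wv j)"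
    by (intro minus_mult_distrib_mat_vec[of _ n n]) auto
  also have "\<dots> = (c * lamv j) \<cdot>\<^sub>v wv j - (\<mu> * c) \<cdot>\<^sub>v wv j"
    by (simp add: mult_mat_vec[OF TT_carrier] TT_wv smult_one_mult_vec smult_smult_assoc mult.commute)
  also have "\<dots> = (c * (lamv j - \<mu>)) \<cdot>\<^sub>v wv j"
    by (intro eq_vecI) (auto simp: algebra_simps)
  finally show ?thesis .
qed

lemma sig_pos: "cmod \<sigma> > 0" using sig0 by simp

lemma main:
  assumes h: "1 \<le> h" "h \<le> n" and ev: "eigenvector TT x (lamv h)"
  shows "eigvec_cond TT x = 1 / (4 * cmod \<sigma> * sin al * gm h)"
proof -
  let ?\<mu> = "lamv h"
  let ?p = "h - 1"
  have p: "?p < n" using h by simp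
  have x: "x \<in> carrier_vec n" "x \<noteq> 0\<^sub>v n" "TT *\<^sub>v x = ?\<mu> \<cdot>\<^sub>v x"
    using ev unfolding eigenvector_def by auto
  obtain i where i: "i < n" "x $ i \<noteq> 0" using x(1,2) by (metis carrier_vecD eq_vecI index_zero_vec(1,2))
  have mu: "(SOME \<mu>. TT *\<^sub>v x = \<mu> \<cdot>\<^sub>v x) = ?\<mu>"
  proof -
    have "TT *\<^sub>v x = (SOME \<mu>. TT *\<^sub>v x = \<mu> \<cdot>\<^sub>v x) \<cdot>\<^sub>v x" by (rule someI[of _ ?\<mu>]) (rule x(3))
    then have "(SOME \<mu>. TT *\<^sub>v x = \<mu> \<cdot>\<^sub>v x) \<cdot>\<^sub>v x = ?\<mu> \<cdot>\<^sub>v x" using x(3) by simp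
    then have "(SOME \<mu>. TT *\<^sub>v x = \<mu> \<cdot>\<^sub>v x) * x $ i = ?\<mu> * x $ i"
      by (metis i(1) x(1) carrier_vecD index_smult_vec(1))
    then show ?thesis using i by simp
  qed
  define U0 where "U0 = (SOME U. range_basis TT ?\<mu> U)"
  have rb: "range_basis TT ?\<mu> U0" unfolding U0_def by (rule someI[of _ "WS h"]) (rule range_ex[OF h])
  then have U0: "U0 \<in> carrier_mat n (n - 1)" "mat_adjoint U0 * U0 = 1\<^sub>m (n - 1)"
    and rng: "{(TT - ?\<mu> \<cdot>\<^sub>m 1\<^sub>m n) *\<^sub>v y | y. y \<in> carrier_vec n} = {U0 *\<^sub>v z | z. z \<in> carrier_vec (n - 1)}"
    unfolding range_basis_def Let_def by auto
  define Z where "Z = mat_adjoint U0 * WS h"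
  have Wcol: "\<exists>z \<in> carrier_vec (n - 1). col (WS h) k = U0 *\<^sub>v z" if k: "k < n - 1" for k
  proof -
    define j where "j = sel ?p k + 1"
    have j: "1 \<le> j" "j \<le> n" "j \<noteq> h" using sel_lt[OF k p] sel_ne[of ?p k] h unfolding j_def by auto
    have ne: "lamv j - ?\<mu> \<noteq> 0" using lam_ne[OF j(1,2) h j(3)] by simp
    have "col (WS h) k = wv j" using col_WS[OF k] unfolding j_def .
    also have "\<dots> = (TT - ?\<mu> \<cdot>\<^sub>m 1\<^sub>m n) *\<^sub>v ((1 / (lamv j - ?\<mu>)) \<cdot>\<^sub>v wv j)"
      unfolding shift_wv using ne by simp
    finally have "col (WS h) k \<in> {(TT - ?\<mu> \<cdot>\<^sub>m 1\<^sub>m n) *\<^sub>v y | y. y \<in> carrier_vec n}" by auto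
    then show ?thesis unfolding rng by auto
  qed
  have ne: "?\<mu> \<noteq> lamS h k" if "k < n - 1" for k
    using lam_ne[of h "sel ?p k + 1"] sel_lt[OF that p] sel_ne[of ?p k] h unfolding lamS_def by auto
  note R0 = reduce[OF TT_carrier WS_carrier U0(1) WS_unit[OF h] U0(2) TT_WS[OF h], of "lamv h" Z]
  have R: "mat_inv (?\<mu> \<cdot>\<^sub>m 1\<^sub>m (n - 1) - mat_adjoint U0 * TT * U0) = Z * dmat (n - 1) (\<lambda>k. 1 / (?\<mu> - lamS h k)) * mat_adjoint Z"
    "mat_adjoint Z * Z = 1\<^sub>m (n - 1)" "Z * mat_adjoint Z = 1\<^sub>m (n - 1)" "Z \<in> carrier_mat (n - 1) (n - 1)"
    by (rule R0; use Wcol ne Z_def in blast)+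
  define M where "M = 1 / (4 * cmod \<sigma> * sin al * gm h)"
  have sa: "sin al > 0" using sinpos[of 1] by simp
  have gmp: "gm h > 0" using T3[OF h] .
  have dval: "cmod (1 / (?\<mu> - lamS h k)) = 1 / (2 * cmod \<sigma> * gap h (sel ?p k + 1))" for k
    unfolding lamS_def by (simp add: norm_divide E6)
  have bd: "cmod (1 / (?\<mu> - lamS h k)) \<le> M" if k: "k < n - 1" for k
  proof -
    define j where "j = sel ?p k + 1"
    have j: "1 \<le> j" "j \<le> n" "j \<noteq> h" using sel_lt[OF k p] sel_ne[of ?p k] h unfolding j_def by auto
    have g: "2 * sin al * gm h \<le> gap h j" using T1[OF h j(1,2) j(3)] .
    have "1 / (2 * cmod \<sigma> * gap h j) \<le> 1 / (2 * cmod \<sigma> * (2 * sin al * gm h))"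
    proof -
      have bp: "0 < 2 * cmod \<sigma> * (2 * sin al * gm h)" using sig_pos sa gmp by simp
      have le: "2 * cmod \<sigma> * (2 * sin al * gm h) \<le> 2 * cmod \<sigma> * gap h j"
        by (rule mult_left_mono[OF g]) simp
      then have "0 < 2 * cmod \<sigma> * gap h j" using bp by linarith
      then have "0 < (2 * cmod \<sigma> * gap h j) * (2 * cmod \<sigma> * (2 * sin al * gm h))" using bp by (rule mult_pos_pos)
      then show ?thesis using le by (intro divide_left_mono) auto
    qed
    then show ?thesis unfolding dval M_def j_def by (simp add: mult_ac)
  qed
  obtain j where j: "1 \<le> j" "j \<le> n" "j \<noteq> h" "gap h j = 2 * sin al * gm h" using T2[OF h] by blast
  define k0 where "k0 = unsel ?p (j - 1)"
  have jp: "j - 1 \<noteq> ?p" "j - 1 < n" using j h by auto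
  have k0: "k0 < n - 1" "sel ?p k0 + 1 = j" unfolding k0_def
    using unsel_lt[OF jp(2) jp(1) p] sel_unsel[OF jp(1)] j(1) by auto
  have att: "cmod (1 / (?\<mu> - lamS h k0)) = M" unfolding dval k0(2) j(4) M_def by (simp add: mult_ac)
  have "eigvec_cond TT x = opnorm2 (mat_inv (?\<mu> \<cdot>\<^sub>m 1\<^sub>m (n - 1) - mat_adjoint U0 * TT * U0))"
    unfolding eigvec_cond_def Let_def mu U0_def by simp
  also have "\<dots> = opnorm2 (Z * dmat (n - 1) (\<lambda>k. 1 / (?\<mu> - lamS h k)) * mat_adjoint Z)"
    using R(1) by simp
  also have "\<dots> = M" by (rule opnorm_unitary_diag[where d = "\<lambda>k. 1 / (?\<mu> - lamS h k)", OF R(4) R(2) R(3) bd k0(1) att])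
  finally show ?thesis unfolding M_def .
qed

end


theorem proposition5:
  fixes n :: nat and \<sigma> \<delta> \<tau> :: complex
  defines "T \<equiv> tridiag_toeplitz n \<sigma> \<delta> \<tau>"
    and "lam \<equiv> (\<lambda>h::nat. \<delta> + 2 * csqrt (\<sigma> * \<tau>) * complex_of_real (cos (real h * pi / real (n + 1))))"
    and "s \<equiv> sin (pi / (2 * real (n + 1)))"
  assumes "n \<ge> 2" and "\<sigma> * \<tau> \<noteq> 0"
    and "normal_mat T"
  shows "(\<forall>h x. 1 \<le> h \<and> h \<le> n \<and> eigenvector T x (lam h) \<and> vnorm x = 1 \<longrightarrow>
            eigvec_cond T x =
              (if (1 < h \<and> 2 * h \<le> n) \<or> h = n
               then 1 / (4 * cmod \<sigma> * s * sin ((2 * real h - 1) * pi / (2 * real (n + 1))))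
               else 1 / (4 * cmod \<sigma> * s * sin ((2 * real h + 1) * pi / (2 * real (n + 1))))))
       \<and> (\<forall>h x. 1 \<le> h \<and> h \<le> n \<and> eigenvector T x (lam h) \<and> vnorm x = 1 \<longrightarrow>
            eigvec_cond T x \<le> 1 / (4 * cmod \<sigma> * s * sin (3 * pi / (2 * real (n + 1)))))
       \<and> (\<forall>h x. h \<in> {1, 2, n - 1, n} \<and> eigenvector T x (lam h) \<and> vnorm x = 1 \<longrightarrow>
            eigvec_cond T x = 1 / (4 * cmod \<sigma> * s * sin (3 * pi / (2 * real (n + 1)))))"
proof -
  have md: "cmod \<sigma> = cmod \<tau>" using tt_normal_mod[OF assms(4)] assms(6) unfolding T_def by blast
  interpret ttc n \<sigma> \<delta> \<tau> by unfold_locales (use assms md in auto)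
  have TT: "T = TT" unfolding T_def TT_def ..
  have L: "lam = lamv" unfolding lam_def by (simp add: lamv_def cc_def fun_eq_iff)
  have S: "s = sin al" unfolding s_def al_def ..
  have key: "eigvec_cond T x = 1 / (4 * cmod \<sigma> * s * gm h)"
    if "1 \<le> h" "h \<le> n" "eigenvector T x (lam h)" for h x
    using main[of h x] that unfolding TT L S by blast
  have ang: "r * pi / (2 * real (n + 1)) = r * al" for r unfolding al_def by simp
  have p3: "sin (3 * al) > 0" using sinpos[of 3] assms(4) by simp
  have sp: "sin al > 0" using sinpos[of 1] by simp
  have cs: "cmod \<sigma> > 0" by (rule sig_pos)
  have part1: "eigvec_cond T x =
              (if (1 < h \<and> 2 * h \<le> n) \<or> h = n
               then 1 / (4 * cmod \<sigma> * s * sin ((2 * real h - 1) * pi / (2 * real (n + 1))))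
               else 1 / (4 * cmod \<sigma> * s * sin ((2 * real h + 1) * pi / (2 * real (n + 1)))))"
    if "1 \<le> h" "h \<le> n" "eigenvector T x (lam h)" for h x
    unfolding key[OF that] ang gm_def by simp
  have part2: "eigvec_cond T x \<le> 1 / (4 * cmod \<sigma> * s * sin (3 * pi / (2 * real (n + 1))))"
    if "1 \<le> h" "h \<le> n" "eigenvector T x (lam h)" for h x
  proof -
    have g: "sin (3 * al) \<le> gm h" using T4[OF that(1,2)] .
    have pos: "0 < 4 * cmod \<sigma> * s * sin (3 * al)" unfolding S using p3 sp cs by simp
    have le: "4 * cmod \<sigma> * s * sin (3 * al) \<le> 4 * cmod \<sigma> * s * gm h"
      by (rule mult_left_mono[OF g]) (use sp cs S in simp)
    then have "0 < (4 * cmod \<sigma> * s * gm h) * (4 * cmod \<sigma> * s * sin (3 * al))" using pos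
      by (metis mult_pos_pos order_less_le_trans)
    then have "1 / (4 * cmod \<sigma> * s * gm h) \<le> 1 / (4 * cmod \<sigma> * s * sin (3 * al))"
      using le by (intro divide_left_mono) auto
    then show ?thesis unfolding key[OF that] ang .
  qed
  have part3: "eigvec_cond T x = 1 / (4 * cmod \<sigma> * s * sin (3 * pi / (2 * real (n + 1))))"
    if "h \<in> {1, 2, n - 1, n}" "eigenvector T x (lam h)" for h x
  proof -
    have "1 \<le> h" "h \<le> n" using that(1) assms(4) by auto
    show ?thesis unfolding key[OF \<open>1 \<le> h\<close> \<open>h \<le> n\<close> that(2)] ang T5[OF that(1)] ..
  qed
  show ?thesis using part1 part2 part3 by blast
qed

end
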